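(* The average-cost relative value function $V$ (the limit $\lim_{\alpha\uparrow1}(V_\alpha - V_\alpha(0))$ solving the average-cost dynamic programming equation with $V(0)=0$) is increasing in its argument: $y>z$ implies $V(z)\le V(y)$.
   Context: Single-server problem: Bernoulli($p$) arrivals, queue $X_{t+1}=X_t-D_{t+1}+\nu_t\xi_{t+1}$ on $\mathcal N=\{0,1,\dots\}$, $\nu_t\in\{0,1\}$ (1 active, 0 passive), $D_{t+1}\sim\mathrm{Binomial}(x,q/x)$ given $X_t=x\ge1$, no departures at $x=0$; $C>0$, $1>q>2p>0$, $\lambda\in\mathbb R$, cost $c(x,\nu)=Cx+(1-\nu)\lambda$. For $0<\alpha<1$, $V_\alpha(x)$ is the optimal $\alpha$-discounted cost from $x$ over admissible controls. The average-cost DP equation is $V(x)=Cx-\beta+\min\big(\mathbb{E}_x[pV(x-D+1)+(1-p)V(x-D)],\ \lambda+\mathbb{E}_x[V(x-D)]\big)$ where $\mathbb{E}_x$ is over $D\sim\mathrm{Binomial}(x,q/x)$. *)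

theory Defs
  imports Complex_Main
begin

text \<open>State x = queue length. Action: True = active (arrivals admitted, nu = 1),
  False = passive (nu = 0, extra cost lam).
  Given X_t = x, D ~ Binomial(x, q/x) (for x = 0 the formula below gives D = 0 a.s.),
  arrival xi ~ Bernoulli(p) independent of D, next state x - D + nu * xi.\<close>

definition dprob :: "real \<Rightarrow> nat \<Rightarrow> nat \<Rightarrow> real" where
  "dprob q x d = real (x choose d) * (q / real x) ^ d * (1 - q / real x) ^ (x - d)"

text \<open>An admissible (history-dependent, deterministic) control: a function of the
  history of observed states X_0, ..., X_t (last element = current state).\<close>
type_synonym policy = "nat list \<Rightarrow> bool"

fun Jfin :: "real \<Rightarrow> real \<Rightarrow> real \<Rightarrow> real \<Rightarrow> real \<Rightarrow> policy \<Rightarrow> nat \<Rightarrow> nat list \<Rightarrow> nat \<Rightarrow> real" where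
  "Jfin p q C lam \<alpha> pol 0 h x = 0"
| "Jfin p q C lam \<alpha> pol (Suc n) h x =
     (let h' = h @ [x]; a = pol h' in
       C * real x + (if a then 0 else lam)
       + \<alpha> * (\<Sum>d\<le>x. dprob q x d *
            (if a then p * Jfin p q C lam \<alpha> pol n h' (x - d + 1)
                       + (1 - p) * Jfin p q C lam \<alpha> pol n h' (x - d)
             else Jfin p q C lam \<alpha> pol n h' (x - d))))"

definition disc_cost :: "real \<Rightarrow> real \<Rightarrow> real \<Rightarrow> real \<Rightarrow> real \<Rightarrow> policy \<Rightarrow> nat \<Rightarrow> real" where
  "disc_cost p q C lam \<alpha> pol x = lim (\<lambda>n. Jfin p q C lam \<alpha> pol n [] x)"

definition Valpha :: "real \<Rightarrow> real \<Rightarrow> real \<Rightarrow> real \<Rightarrow> real \<Rightarrow> nat \<Rightarrow> real" where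
  "Valpha p q C lam \<alpha> x = (INF pol. disc_cost p q C lam \<alpha> pol x)"

end

theory Submission imports Defs begin

definition bs :: "nat \<Rightarrow> real \<Rightarrow> (nat \<Rightarrow> real) \<Rightarrow> real" where
  "bs n a f = (\<Sum>s\<le>n. real (n choose s) * a ^ s * (1 - a) ^ (n - s) * f s)"

lemma bs_Suc: "bs (Suc n) a f = a * bs n a (\<lambda>s. f (Suc s)) + (1 - a) * bs n a f"
proof -
  let ?b = "1 - a"
  have L: "bs (Suc n) a f = ?b ^ Suc n * f 0
     + (\<Sum>s\<le>n. real (n choose s) * a ^ Suc s * ?b ^ (n - s) * f (Suc s))
     + (\<Sum>s\<le>n. real (n choose Suc s) * a ^ Suc s * ?b ^ (n - s) * f (Suc s))"
    unfolding bs_def sum.atMost_Suc_shift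
    by (simp add: sum.distrib algebra_simps)
  have 1: "(\<Sum>s\<le>n. real (n choose s) * a ^ Suc s * ?b ^ (n - s) * f (Suc s)) = a * bs n a (\<lambda>s. f (Suc s))"
    unfolding bs_def sum_distrib_left by (rule sum.cong) (auto simp: algebra_simps)
  have "?b * bs n a f = ?b * (\<Sum>s\<le>Suc n. real (n choose s) * a ^ s * ?b ^ (n - s) * f s)"
    unfolding bs_def by simp
  also have "\<dots> = ?b ^ Suc n * f 0 + (\<Sum>s\<le>n. real (n choose Suc s) * a ^ Suc s * (?b * ?b ^ (n - Suc s)) * f (Suc s))"
    unfolding sum.atMost_Suc_shift sum_distrib_left distrib_left by (simp add: mult_ac)
  also have "(\<Sum>s\<le>n. real (n choose Suc s) * a ^ Suc s * (?b * ?b ^ (n - Suc s)) * f (Suc s))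
        = (\<Sum>s\<le>n. real (n choose Suc s) * a ^ Suc s * ?b ^ (n - s) * f (Suc s))"
  proof (rule sum.cong)
    fix s assume "s \<in> {..n}"
    then show "real (n choose Suc s) * a ^ Suc s * (?b * ?b ^ (n - Suc s)) * f (Suc s)
        = real (n choose Suc s) * a ^ Suc s * ?b ^ (n - s) * f (Suc s)"
    proof (cases "s = n")
      case False
      then have "n - s = Suc (n - Suc s)" using \<open>s \<in> {..n}\<close> by auto
      then show ?thesis by simp
    qed simp
  qed simp
  finally show ?thesis using L 1 by simp
qed

lemma bs_mono_f:
  assumes "0 \<le> a" "a \<le> 1" "\<And>s. s \<le> n \<Longrightarrow> f s \<le> g s"
  shows "bs n a f \<le> bs n a g"
  unfolding bs_def using assms by (intro sum_mono mult_left_mono) auto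

lemma bs_const: "bs n a (\<lambda>_. c) = c"
  by (induction n) (simp_all add: bs_Suc, simp add: bs_def, simp add: algebra_simps)

lemma bs_mono_a:
  assumes "mono f" "0 \<le> a" "a \<le> a'" "a' \<le> 1"
  shows "bs n a f \<le> bs n a' f"
  using assms(1)
proof (induction n arbitrary: f)
  case 0 then show ?case by (simp add: bs_def)
next
  case (Suc n)
  have m2: "mono (\<lambda>s. f (Suc s))" using Suc.prems by (auto simp: mono_def)
  have fg: "bs n a f \<le> bs n a (\<lambda>s. f (Suc s))"
    using assms Suc.prems by (intro bs_mono_f) (auto simp: mono_def)
  have "bs (Suc n) a f = a * bs n a (\<lambda>s. f (Suc s)) + (1 - a) * bs n a f" by (rule bs_Suc)
  also have "\<dots> \<le> a' * bs n a (\<lambda>s. f (Suc s)) + (1 - a') * bs n a f"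
  proof -
    have "0 \<le> (a' - a) * (bs n a (\<lambda>s. f (Suc s)) - bs n a f)" using fg assms by simp
    then show ?thesis by (simp add: algebra_simps)
  qed
  also have "\<dots> \<le> a' * bs n a' (\<lambda>s. f (Suc s)) + (1 - a') * bs n a' f"
    using Suc.IH[OF m2] Suc.IH[OF Suc.prems] assms
    by (intro add_mono mult_left_mono) auto
  also have "\<dots> = bs (Suc n) a' f" by (rule bs_Suc[symmetric])
  finally show ?case .
qed

definition Ex :: "real \<Rightarrow> nat \<Rightarrow> (nat \<Rightarrow> real) \<Rightarrow> real" where
  "Ex q x f = (\<Sum>d\<le>x. dprob q x d * f (x - d))"

lemma Ex_bs: "Ex q x f = bs x (1 - q / real x) f"
proof -
  have "Ex q x f = (\<Sum>d=0..x. dprob q x (x + 0 - d) * f (x - (x + 0 - d)))"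
    unfolding Ex_def atLeast0AtMost[symmetric] by (rule sum.atLeastAtMost_rev)
  also have "\<dots> = bs x (1 - q / real x) f"
    unfolding bs_def atLeast0AtMost
  proof (rule sum.cong)
    fix s assume "s \<in> {..x}"
    then show "dprob q x (x + 0 - s) * f (x - (x + 0 - s)) =
      real (x choose s) * (1 - q / real x) ^ s * (1 - (1 - q / real x)) ^ (x - s) * f s"
      by (auto simp: dprob_def binomial_symmetric[of s x] mult_ac)
  qed simp
  finally show ?thesis .
qed

lemma Ex_mono:
  assumes "mono f" "0 < q" "q < 1"
  shows "Ex q x f \<le> Ex q (Suc x) f"
proof -
  define b where "b = 1 - q / real (Suc x)"
  have b: "0 \<le> b" "b \<le> 1" using assms by (auto simp: b_def field_simps)
  have "bs x (1 - q / real x) f \<le> bs x b f"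
  proof (cases "x = 0")
    case True then show ?thesis by (simp add: bs_def)
  next
    case False
    then have "q / real (Suc x) \<le> q / real x" using assms by (intro divide_left_mono) auto
    moreover have "q / real x \<le> 1" using False assms by (auto simp: field_simps)
    ultimately show ?thesis using b assms by (intro bs_mono_a) (auto simp: b_def)
  qed
  also have "bs x b f \<le> bs x b (\<lambda>s. f (Suc s))"
    using assms b by (intro bs_mono_f) (auto simp: mono_def)
  then have "bs x b f \<le> b * bs x b (\<lambda>s. f (Suc s)) + (1 - b) * bs x b f"
  proof -
    have "0 \<le> b * (bs x b (\<lambda>s. f (Suc s)) - bs x b f)" using b \<open>bs x b f \<le> _\<close> by simp
    then show ?thesis by (simp add: algebra_simps)
  qed
  also have "\<dots> = Ex q (Suc x) f" by (simp add: Ex_bs bs_Suc b_def)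
  finally show ?thesis by (simp add: Ex_bs)
qed

lemma Ex_const: "Ex q x (\<lambda>_. c) = c"
  by (simp add: Ex_bs bs_const)

lemma dprob_nonneg: "0 < q \<Longrightarrow> q < 1 \<Longrightarrow> d \<le> x \<Longrightarrow> 0 \<le> dprob q x d"
  unfolding dprob_def
  by (cases "x = 0") (auto simp: field_simps intro!: mult_nonneg_nonneg)

lemma Ex_le:
  assumes "0 < q" "q < 1" "\<And>s. s \<le> x \<Longrightarrow> f s \<le> g s"
  shows "Ex q x f \<le> Ex q x g"
  unfolding Ex_def using assms dprob_nonneg[OF assms(1,2)] by (intro sum_mono mult_left_mono) auto

lemma Ex_lin: "Ex q x (\<lambda>s. a * f s + b * g s) = a * Ex q x f + b * Ex q x g"
  unfolding Ex_def by (simp add: sum.distrib sum_distrib_left algebra_simps)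

lemma Ex_abs:
  assumes "0 < q" "q < 1" "\<And>s. s \<le> x \<Longrightarrow> \<bar>f s\<bar> \<le> M"
  shows "\<bar>Ex q x f\<bar> \<le> M"
proof -
  have "Ex q x f \<le> Ex q x (\<lambda>_. M)" using assms by (intro Ex_le) (auto simp: abs_le_iff)
  moreover have "Ex q x (\<lambda>_. -M) \<le> Ex q x f" using assms by (intro Ex_le) (auto simp: abs_le_iff, fastforce)
  ultimately show ?thesis by (simp add: Ex_const)
qed

lemma Jfin_Suc_Ex:
  "Jfin p q C lam \<alpha> pol (Suc n) h x =
    C * real x + (if pol (h @ [x]) then 0 else lam)
    + \<alpha> * (if pol (h @ [x]) then Ex q x (\<lambda>s. p * Jfin p q C lam \<alpha> pol n (h @ [x]) (Suc s) + (1 - p) * Jfin p q C lam \<alpha> pol n (h @ [x]) s)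
            else Ex q x (Jfin p q C lam \<alpha> pol n (h @ [x])))"
  by (cases "pol (h @ [x])") (auto simp: Let_def Ex_def intro!: sum.cong)

lemma conv_aux:
  assumes "0 \<le> p" "p \<le> 1" "\<bar>a\<bar> \<le> M" "\<bar>b\<bar> \<le> (M::real)"
  shows "\<bar>p * a + (1 - p) * b\<bar> \<le> M"
proof -
  have "\<bar>p * a + (1 - p) * b\<bar> \<le> \<bar>p * a\<bar> + \<bar>(1 - p) * b\<bar>" by (rule abs_triangle_ineq)
  also have "\<dots> = p * \<bar>a\<bar> + (1 - p) * \<bar>b\<bar>" using assms by (simp add: abs_mult)
  also have "\<dots> \<le> p * M + (1 - p) * M" using assms by (intro add_mono mult_left_mono) auto
  finally show ?thesis by (simp add: algebra_simps)
qed

lemma Ex_diff: "Ex q x f - Ex q x g = Ex q x (\<lambda>s. f s - g s)"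
  unfolding Ex_def by (simp add: sum_subtractf[symmetric] algebra_simps)

lemma abs_aux: "\<bar>e\<bar> \<le> k \<Longrightarrow> 0 \<le> (c::real) \<Longrightarrow> \<bar>l\<bar> \<le> L \<Longrightarrow> \<bar>c + l + e\<bar> \<le> c + L + k"
  by (simp add: abs_le_iff)

context
  fixes p q C lam \<alpha> :: real
  assumes pq: "0 < p" "p \<le> 1" "0 < q" "q < 1" "0 < C" "0 < \<alpha>" "\<alpha> < 1"
begin

definition K :: "nat \<Rightarrow> real" where
  "K x = (C * real x + \<bar>lam\<bar>) / (1 - \<alpha>) + C * \<alpha> / (1 - \<alpha>)^2"

lemma K_aux: "(d::real) > 0 \<Longrightarrow>
   c * X + l + (1 - d) * ((c * (X + 1) + l) / d + c * (1 - d) / d^2) = (c * X + l) / d + c * (1 - d) / d^2"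
  by (simp add: field_simps power2_eq_square)

lemma K_rec: "C * real x + \<bar>lam\<bar> + \<alpha> * K (Suc x) = K x"
  using pq K_aux[of "1 - \<alpha>" C "real x" "\<bar>lam\<bar>"] unfolding K_def by (simp add: add.commute)

lemma K_mono: "x \<le> y \<Longrightarrow> K x \<le> K y"
  using pq unfolding K_def by (intro add_right_mono divide_right_mono) auto

lemma J_bound: "\<bar>Jfin p q C lam \<alpha> pol n h x\<bar> \<le> K x"
proof (induction n arbitrary: h x)
  case 0
  have "0 \<le> K x" using pq unfolding K_def by (intro add_nonneg_nonneg divide_nonneg_nonneg) auto
  then show ?case by simp
next
  case (Suc n)
  let ?J = "Jfin p q C lam \<alpha> pol n (h @ [x])"
  have A: "\<bar>Ex q x (\<lambda>s. p * ?J (Suc s) + (1 - p) * ?J s)\<bar> \<le> K (Suc x)"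
  proof (rule Ex_abs[OF pq(3,4)])
    fix s assume s: "s \<le> x"
    have "\<bar>p * ?J (Suc s) + (1 - p) * ?J s\<bar> \<le> p * \<bar>?J (Suc s)\<bar> + (1 - p) * \<bar>?J s\<bar>"
      by (rule order_trans[OF abs_triangle_ineq]) (use pq in \<open>simp add: abs_mult\<close>)
    also have "\<dots> \<le> p * K (Suc x) + (1 - p) * K (Suc x)"
      using pq Suc.IH[of "h @ [x]"] K_mono[of "Suc s" "Suc x"] K_mono[of s "Suc x"] s
      by (intro add_mono mult_left_mono) (auto intro: order_trans)
    finally show "\<bar>p * ?J (Suc s) + (1 - p) * ?J s\<bar> \<le> K (Suc x)" by (simp add: algebra_simps)
  qed
  have B: "\<bar>Ex q x ?J\<bar> \<le> K (Suc x)"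
    using Suc.IH K_mono by (intro Ex_abs[OF pq(3,4)]) (meson order_trans le_SucI)
  have "\<bar>Jfin p q C lam \<alpha> pol (Suc n) h x\<bar> \<le> C * real x + \<bar>lam\<bar> + \<alpha> * K (Suc x)"
  proof (cases "pol (h @ [x])")
    case True
    have "\<bar>\<alpha> * Ex q x (\<lambda>s. p * ?J (Suc s) + (1 - p) * ?J s)\<bar> \<le> \<alpha> * K (Suc x)"
      using A pq by (simp add: abs_mult mult_left_mono)
    then show ?thesis unfolding Jfin_Suc_Ex using True pq
      by (intro abs_aux) auto
  next
    case False
    have "\<bar>\<alpha> * Ex q x ?J\<bar> \<le> \<alpha> * K (Suc x)"
      using B pq by (simp add: abs_mult mult_left_mono)
    then show ?thesis unfolding Jfin_Suc_Ex using False pq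
      by (intro abs_aux) auto
  qed
  then show ?case by (simp add: K_rec)
qed

lemma J_diff: "\<bar>Jfin p q C lam \<alpha> pol (n + m) h x - Jfin p q C lam \<alpha> pol n h x\<bar> \<le> \<alpha>^n * K (x + n)"
proof (induction n arbitrary: h x)
  case 0 then show ?case using J_bound[of pol m h x] by simp
next
  case (Suc n)
  let ?A = "Jfin p q C lam \<alpha> pol (n + m) (h @ [x])"
  let ?B = "Jfin p q C lam \<alpha> pol n (h @ [x])"
  let ?M = "\<alpha>^n * K (Suc x + n)"
  have D: "\<bar>?A s - ?B s\<bar> \<le> ?M" if "s \<le> Suc x" for s
  proof -
    have "\<alpha>^n * K (s + n) \<le> ?M" using pq that K_mono[of "s+n" "Suc x+n"] by (intro mult_left_mono) auto
    then show ?thesis using Suc.IH[of "h@[x]" s] by linarith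
  qed
  have E1: "\<bar>Ex q x (\<lambda>s. p * ?A (Suc s) + (1 - p) * ?A s) - Ex q x (\<lambda>s. p * ?B (Suc s) + (1 - p) * ?B s)\<bar> \<le> ?M"
    unfolding Ex_diff
  proof (rule Ex_abs[OF pq(3,4)])
    fix s assume s: "s \<le> x"
    have "p * ?A (Suc s) + (1 - p) * ?A s - (p * ?B (Suc s) + (1 - p) * ?B s)
        = p * (?A (Suc s) - ?B (Suc s)) + (1 - p) * (?A s - ?B s)" by (simp add: algebra_simps)
    also have "\<bar>\<dots>\<bar> \<le> ?M" using pq s D[of "Suc s"] D[of s] by (intro conv_aux) auto
    finally show "\<bar>p * ?A (Suc s) + (1 - p) * ?A s - (p * ?B (Suc s) + (1 - p) * ?B s)\<bar> \<le> ?M" .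
  qed
  have E2: "\<bar>Ex q x ?A - Ex q x ?B\<bar> \<le> ?M"
    unfolding Ex_diff using D by (intro Ex_abs[OF pq(3,4)]) auto
  have "\<bar>Jfin p q C lam \<alpha> pol (Suc n + m) h x - Jfin p q C lam \<alpha> pol (Suc n) h x\<bar> \<le> \<alpha> * ?M"
  proof (cases "pol (h @ [x])")
    case True
    have "\<bar>Jfin p q C lam \<alpha> pol (Suc n + m) h x - Jfin p q C lam \<alpha> pol (Suc n) h x\<bar>
      = \<alpha> * \<bar>Ex q x (\<lambda>s. p * ?A (Suc s) + (1 - p) * ?A s) - Ex q x (\<lambda>s. p * ?B (Suc s) + (1 - p) * ?B s)\<bar>"
      using True pq unfolding add_Suc Jfin_Suc_Ex by (simp add: abs_mult right_diff_distrib[symmetric])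
    then show ?thesis using E1 pq by (simp add: mult_left_mono)
  next
    case False
    have "\<bar>Jfin p q C lam \<alpha> pol (Suc n + m) h x - Jfin p q C lam \<alpha> pol (Suc n) h x\<bar>
      = \<alpha> * \<bar>Ex q x ?A - Ex q x ?B\<bar>"
      using False pq unfolding add_Suc Jfin_Suc_Ex by (simp add: abs_mult right_diff_distrib[symmetric])
    then show ?thesis using E2 pq by (simp add: mult_left_mono)
  qed
  then show ?case by (simp add: mult.assoc)
qed

lemma e_lim: "(\<lambda>n. \<alpha>^n * K (x + n)) \<longlonglongrightarrow> 0"
proof -
  define A where "A = (C * real x + \<bar>lam\<bar>) / (1 - \<alpha>) + C * \<alpha> / (1 - \<alpha>)^2"
  define B where "B = C / (1 - \<alpha>)"
  have "K (x + n) = A + B * real n" for n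
    unfolding K_def A_def B_def by (simp add: add_divide_distrib distrib_left)
  then have eq: "(\<lambda>n. \<alpha>^n * K (x + n)) = (\<lambda>n. A * \<alpha>^n + B * (real n * \<alpha>^n))"
    by (simp add: fun_eq_iff algebra_simps)
  have l1: "(\<lambda>n. \<alpha>^n) \<longlonglongrightarrow> 0" using pq by (intro LIMSEQ_power_zero) auto
  have l2: "(\<lambda>n. real n * \<alpha>^n) \<longlonglongrightarrow> 0" using pq by (intro powser_times_n_limit_0) auto
  have "(\<lambda>n. A * \<alpha>^n + B * (real n * \<alpha>^n)) \<longlonglongrightarrow> A * 0 + B * 0"
    by (intro tendsto_add tendsto_mult tendsto_const l1 l2)
  then show ?thesis unfolding eq by simp
qed

lemma J_conv: "convergent (\<lambda>n. Jfin p q C lam \<alpha> pol n h x)"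
proof -
  let ?X = "\<lambda>n. Jfin p q C lam \<alpha> pol n h x"
  let ?e = "\<lambda>n. \<alpha>^n * K (x + n)"
  have "Cauchy ?X"
  proof (rule metric_CauchyI)
    fix \<epsilon> :: real assume "0 < \<epsilon>"
    then have "eventually (\<lambda>n. ?e n < \<epsilon> / 2) sequentially"
      using e_lim[of x] by (intro order_tendstoD(2)) auto
    then obtain N where N: "\<And>n. n \<ge> N \<Longrightarrow> ?e n < \<epsilon> / 2" by (auto simp: eventually_sequentially)
    have "dist (?X m) (?X n) < \<epsilon>" if "m \<ge> N" "n \<ge> N" for m n
    proof -
      have "\<bar>?X (N + (m - N)) - ?X N\<bar> \<le> ?e N" by (rule J_diff)
      moreover have "\<bar>?X (N + (n - N)) - ?X N\<bar> \<le> ?e N" by (rule J_diff)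
      ultimately show ?thesis using that N[of N] by (auto simp add: dist_real_def abs_le_iff abs_less_iff)
    qed
    then show "\<exists>M. \<forall>m\<ge>M. \<forall>n\<ge>M. dist (?X m) (?X n) < \<epsilon>" by blast
  qed
  then show ?thesis by (simp add: Cauchy_convergent_iff)
qed

lemma disc_close: "\<bar>disc_cost p q C lam \<alpha> pol x - Jfin p q C lam \<alpha> pol n [] x\<bar> \<le> \<alpha>^n * K (x + n)"
proof -
  let ?X = "\<lambda>n. Jfin p q C lam \<alpha> pol n [] x"
  have "?X \<longlonglongrightarrow> disc_cost p q C lam \<alpha> pol x"
    using J_conv unfolding disc_cost_def by (simp add: convergent_LIMSEQ_iff)
  then have "(\<lambda>m. ?X (m + n)) \<longlonglongrightarrow> disc_cost p q C lam \<alpha> pol x"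
    by (rule LIMSEQ_ignore_initial_segment)
  then have "(\<lambda>m. \<bar>?X (m + n) - ?X n\<bar>) \<longlonglongrightarrow> \<bar>disc_cost p q C lam \<alpha> pol x - ?X n\<bar>"
    by (intro tendsto_rabs tendsto_diff tendsto_const)
  then show ?thesis
    using J_diff[of pol n _ "[]" x] by (intro LIMSEQ_le_const2) (auto simp: add.commute)
qed

lemma disc_bound: "\<bar>disc_cost p q C lam \<alpha> pol x\<bar> \<le> K x"
  using disc_close[of pol x 0] by simp

fun W :: "nat \<Rightarrow> nat \<Rightarrow> real" where
  "W 0 x = 0"
| "W (Suc n) x = C * real x + min (\<alpha> * Ex q x (\<lambda>s. p * W n (Suc s) + (1 - p) * W n s)) (lam + \<alpha> * Ex q x (W n))"

lemma W_le_J: "W n x \<le> Jfin p q C lam \<alpha> pol n h x"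
proof (induction n arbitrary: h x)
  case 0 then show ?case by simp
next
  case (Suc n)
  let ?J = "Jfin p q C lam \<alpha> pol n (h @ [x])"
  have a: "Ex q x (\<lambda>s. p * W n (Suc s) + (1 - p) * W n s) \<le> Ex q x (\<lambda>s. p * ?J (Suc s) + (1 - p) * ?J s)"
    using pq Suc.IH by (intro Ex_le add_mono mult_left_mono) auto
  have b: "Ex q x (W n) \<le> Ex q x ?J"
    using pq Suc.IH by (intro Ex_le) auto
  show ?case
  proof (cases "pol (h @ [x])")
    case True
    have "\<alpha> * Ex q x (\<lambda>s. p * W n (Suc s) + (1 - p) * W n s) \<le> \<alpha> * Ex q x (\<lambda>s. p * ?J (Suc s) + (1 - p) * ?J s)"
      using a pq by (intro mult_left_mono) auto
    then show ?thesis using True unfolding Jfin_Suc_Ex W.simps by (simp add: min_le_iff_disj)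
  next
    case False
    have "\<alpha> * Ex q x (W n) \<le> \<alpha> * Ex q x ?J"
      using b pq by (intro mult_left_mono) auto
    then show ?thesis using False unfolding Jfin_Suc_Ex W.simps by (simp add: min_le_iff_disj)
  qed
qed

lemma Ex_mono': "mono f \<Longrightarrow> x \<le> y \<Longrightarrow> Ex q x f \<le> Ex q y f"
  by (rule lift_Suc_mono_le[of "\<lambda>x. Ex q x f"]) (use Ex_mono[of f q] pq in auto)

lemma W_mono: "mono (W n)"
proof (induction n)
  case 0 then show ?case by (simp add: mono_def)
next
  case (Suc n)
  have m1: "mono (\<lambda>s. p * W n (Suc s) + (1 - p) * W n s)"
  proof (rule monoI)
    fix a b :: nat assume "a \<le> b"
    then have "W n (Suc a) \<le> W n (Suc b)" "W n a \<le> W n b"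
      using monoD[OF Suc.IH, of "Suc a" "Suc b"] monoD[OF Suc.IH, of a b] by auto
    then show "p * W n (Suc a) + (1 - p) * W n a \<le> p * W n (Suc b) + (1 - p) * W n b"
      using pq by (intro add_mono mult_left_mono) auto
  qed
  show ?case
  proof (rule monoI)
    fix x y :: nat assume "x \<le> y"
    have 1: "Ex q x (\<lambda>s. p * W n (Suc s) + (1 - p) * W n s) \<le> Ex q y (\<lambda>s. p * W n (Suc s) + (1 - p) * W n s)"
      using Ex_mono'[OF m1 \<open>x \<le> y\<close>] .
    have 2: "Ex q x (W n) \<le> Ex q y (W n)"
      using Ex_mono'[OF Suc.IH \<open>x \<le> y\<close>] .
    have 3: "C * real x \<le> C * real y" using pq \<open>x \<le> y\<close> by simp
    show "W (Suc n) x \<le> W (Suc n) y"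
    proof -
      have "min (\<alpha> * Ex q x (\<lambda>s. p * W n (Suc s) + (1 - p) * W n s)) (lam + \<alpha> * Ex q x (W n))
         \<le> min (\<alpha> * Ex q y (\<lambda>s. p * W n (Suc s) + (1 - p) * W n s)) (lam + \<alpha> * Ex q y (W n))"
        using 1 2 pq by (intro min.mono add_left_mono mult_left_mono) auto
      then show ?thesis using 3 by (simp only: W.simps)
    qed
  qed
qed

definition act :: "nat \<Rightarrow> nat \<Rightarrow> bool" where
  "act k x = (\<alpha> * Ex q x (\<lambda>s. p * W (k - 1) (Suc s) + (1 - p) * W (k - 1) s) \<le> lam + \<alpha> * Ex q x (W (k - 1)))"

definition popt :: "nat \<Rightarrow> policy" where
  "popt N h = act (N + 1 - length h) (last h)"

lemma popt_J: "length h + k = N \<Longrightarrow> Jfin p q C lam \<alpha> (popt N) k h x = W k x"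
proof (induction k arbitrary: h x)
  case 0 then show ?case by simp
next
  case (Suc k)
  have IH: "Jfin p q C lam \<alpha> (popt N) k (h @ [x]) s = W k s" for s
    using Suc.prems by (intro Suc.IH) simp
  have "N - length h = Suc k" using Suc.prems by simp
  then have "popt N (h @ [x]) = act (Suc k) x" by (simp add: popt_def)
  then show ?case
    unfolding Jfin_Suc_Ex IH W.simps by (simp add: act_def min_def)
qed

lemma Valpha_mono:
  assumes "z \<le> y"
  shows "Valpha p q C lam \<alpha> z \<le> Valpha p q C lam \<alpha> y"
proof -
  have bdd: "bdd_below (range (\<lambda>pol. disc_cost p q C lam \<alpha> pol x))" for x
  proof (rule bdd_belowI[of _ "- K x"])
    fix v assume "v \<in> range (\<lambda>pol. disc_cost p q C lam \<alpha> pol x)"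
    then obtain pol where "v = disc_cost p q C lam \<alpha> pol x" by auto
    then show "- K x \<le> v" using disc_bound[of pol x] by linarith
  qed
  have key: "Valpha p q C lam \<alpha> z \<le> disc_cost p q C lam \<alpha> pol y" for pol
  proof -
    have le: "Valpha p q C lam \<alpha> z \<le> disc_cost p q C lam \<alpha> pol y + (\<alpha>^n * K (y + n) + \<alpha>^n * K (z + n))" for n
    proof -
      have "Valpha p q C lam \<alpha> z \<le> disc_cost p q C lam \<alpha> (popt n) z"
        unfolding Valpha_def by (rule cINF_lower[OF bdd]) simp
      also have "\<dots> \<le> Jfin p q C lam \<alpha> (popt n) n [] z + \<alpha>^n * K (z + n)"
        using disc_close[of "popt n" z n] by linarith
      also have "Jfin p q C lam \<alpha> (popt n) n [] z = W n z" by (rule popt_J) simp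
      also have "W n z \<le> W n y" using W_mono[of n] assms by (rule monoD)
      also have "W n y \<le> Jfin p q C lam \<alpha> pol n [] y" by (rule W_le_J)
      also have "\<dots> \<le> disc_cost p q C lam \<alpha> pol y + \<alpha>^n * K (y + n)"
        using disc_close[of pol y n] by linarith
      finally show ?thesis by simp
    qed
    have "(\<lambda>n. disc_cost p q C lam \<alpha> pol y + (\<alpha>^n * K (y + n) + \<alpha>^n * K (z + n))) \<longlonglongrightarrow> disc_cost p q C lam \<alpha> pol y + (0 + 0)"
      by (intro tendsto_add[OF tendsto_const tendsto_add[OF e_lim e_lim]])
    then show ?thesis using le by (intro LIMSEQ_le_const) auto
  qed
  show ?thesis unfolding Valpha_def[of _ _ _ _ _ y] by (rule cINF_greatest) (auto simp: key)
qed

end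

theorem lemma5:
  fixes p q C lam :: real and V :: "nat \<Rightarrow> real" and y z :: nat
  assumes "C > 0" and "0 < p" and "2 * p < q" and "q < 1"
    and "\<forall>x. ((\<lambda>\<alpha>. Valpha p q C lam \<alpha> x - Valpha p q C lam \<alpha> 0) \<longlongrightarrow> V x) (at_left 1)"
    and "y > z"
  shows "V z \<le> V y"
proof -
  have ev: "eventually (\<lambda>\<alpha>. Valpha p q C lam \<alpha> z - Valpha p q C lam \<alpha> 0 \<le> Valpha p q C lam \<alpha> y - Valpha p q C lam \<alpha> 0) (at_left 1)"
    using eventually_at_left_real[of 0 "1::real", OF zero_less_one]
  proof eventually_elim
    case (elim \<alpha>)
    then have "Valpha p q C lam \<alpha> z \<le> Valpha p q C lam \<alpha> y"
      using assms by (intro Valpha_mono) auto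
    then show ?case by simp
  qed
  show ?thesis
    by (rule tendsto_le[OF _ assms(5)[rule_format, of y] assms(5)[rule_format, of z] ev]) simp
qed

end
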